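(* For every unweighted congestion game $\mathcal{G}$ with cubic latency functions, $\mathrm{PoS}(\mathcal{G})\le 3.322$.
   Context: A weighted congestion game consists of a finite set $[n]=\{1,\dots,n\}$ of players, a finite set $E$ of resources, for each player $i$ a weight $w_i>0$ and a nonempty finite strategy set $\Sigma_i\subseteq 2^E$, and for each resource $e$ a latency function $\ell_e:\mathbb{R}_{\ge 0}\to\mathbb{R}_{\ge 0}$. It is unweighted if $w_i=1$ for all $i$. Cubic latency functions means $\ell_e(x)=\sum_{j=0}^{3}\alpha_{e,j}x^j$ with all $\alpha_{e,j}\ge 0$. For a strategy profile $S=(s_1,\dots,s_n)$, the congestion of $e$ is $L_e(S)=\sum_{i:\,e\in s_i}w_i$, the cost of player $i$ is $c_i(S)=\sum_{e\in s_i}\ell_e(L_e(S))$, and $\mathrm{SUM}(S)=\sum_i c_i(S)$; $S^*$ minimizes $\mathrm{SUM}$. A pure Nash equilibrium (PNE) is a profile $S$ with $c_i(S)\le c_i(S_{-i}\diamond t)$ for all $i$ and $t\in\Sigma_i$, where $(S_{-i}\diamond t)$ replaces $s_i$ by $t$. $\mathrm{PoS}(\mathcal{G})=\min_{S\ \mathrm{PNE}}\mathrm{SUM}(S)/\mathrm{SUM}(S^* )$. *)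

theory Defs
  imports Main "HOL.Real"
begin

text \<open>Players are 0,...,n-1 (the paper's [n] shifted by one);
  resources form the finite set E; Sig i is the strategy set of player i; w i its weight;
  l e the latency function of resource e. A strategy profile is a function S with
  S i the strategy of player i (values for i >= n are irrelevant).\<close>

definition is_congestion_game ::
  "nat \<Rightarrow> 'e set \<Rightarrow> (nat \<Rightarrow> real) \<Rightarrow> (nat \<Rightarrow> 'e set set) \<Rightarrow> ('e \<Rightarrow> real \<Rightarrow> real) \<Rightarrow> bool" where
  "is_congestion_game n E w Sig l \<longleftrightarrow>
     finite E \<and>
     (\<forall>i<n. w i > 0 \<and> Sig i \<noteq> {} \<and> finite (Sig i) \<and> Sig i \<subseteq> Pow E) \<and>
     (\<forall>e\<in>E. \<forall>x\<ge>0. l e x \<ge> 0)"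

definition unweighted :: "nat \<Rightarrow> (nat \<Rightarrow> real) \<Rightarrow> bool" where
  "unweighted n w \<longleftrightarrow> (\<forall>i<n. w i = 1)"

definition cubic_latencies :: "'e set \<Rightarrow> ('e \<Rightarrow> real \<Rightarrow> real) \<Rightarrow> bool" where
  "cubic_latencies E l \<longleftrightarrow>
     (\<forall>e\<in>E. \<exists>\<alpha> :: nat \<Rightarrow> real. (\<forall>j. \<alpha> j \<ge> 0) \<and>
        (\<forall>x\<ge>0. l e x = (\<Sum>j\<le>3. \<alpha> j * x ^ j)))"

definition is_profile :: "nat \<Rightarrow> (nat \<Rightarrow> 'e set set) \<Rightarrow> (nat \<Rightarrow> 'e set) \<Rightarrow> bool" where
  "is_profile n Sig S \<longleftrightarrow> (\<forall>i<n. S i \<in> Sig i)"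

definition congestion :: "nat \<Rightarrow> (nat \<Rightarrow> real) \<Rightarrow> (nat \<Rightarrow> 'e set) \<Rightarrow> 'e \<Rightarrow> real" where
  "congestion n w S e = (\<Sum>i\<in>{i. i < n \<and> e \<in> S i}. w i)"

definition player_cost ::
  "nat \<Rightarrow> (nat \<Rightarrow> real) \<Rightarrow> ('e \<Rightarrow> real \<Rightarrow> real) \<Rightarrow> (nat \<Rightarrow> 'e set) \<Rightarrow> nat \<Rightarrow> real" where
  "player_cost n w l S i = (\<Sum>e\<in>S i. l e (congestion n w S e))"

definition SUM_cost ::
  "nat \<Rightarrow> (nat \<Rightarrow> real) \<Rightarrow> ('e \<Rightarrow> real \<Rightarrow> real) \<Rightarrow> (nat \<Rightarrow> 'e set) \<Rightarrow> real" where
  "SUM_cost n w l S = (\<Sum>i<n. player_cost n w l S i)"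

definition is_PNE ::
  "nat \<Rightarrow> (nat \<Rightarrow> real) \<Rightarrow> (nat \<Rightarrow> 'e set set) \<Rightarrow> ('e \<Rightarrow> real \<Rightarrow> real) \<Rightarrow> (nat \<Rightarrow> 'e set) \<Rightarrow> bool" where
  "is_PNE n w Sig l S \<longleftrightarrow> is_profile n Sig S \<and>
     (\<forall>i<n. \<forall>t\<in>Sig i. player_cost n w l S i \<le> player_cost n w l (S(i := t)) i)"

end

theory Submission
  imports Defs "HOL-Library.FuncSet"
begin

lemma am2: "2*(u*v) \<le> u^2+(v::real)^2"
  using sum_squares_ge_zero[of "u-v" 0] by (simp add: power2_eq_square algebra_simps)
lemma am3: assumes "0\<le>u" "0\<le>(v::real)" shows "3*(u^2*v) \<le> 2*u^3+v^3"
proof -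
  have "0 \<le> (u-v)^2*(2*u+v)" using assms by simp
  also have "\<dots> = 2*u^3+v^3 - 3*(u^2*v)" by (simp add: power2_eq_square power3_eq_cube algebra_simps)
  finally show ?thesis by simp
qed
lemma am4: assumes "0\<le>u" "0\<le>(v::real)" shows "(5771588/44738875)*(u^3*v) \<le> (489142083/15882300625)*u^4 + v^4"
proof -
  define w where "w = (113/355)*u"
  have w: "0 \<le> w" using assms w_def by simp
  have "0 \<le> (w-v)^2*(3*w^2+2*w*v+v^2)" using assms w by simp
  also have "\<dots> = (489142083/15882300625)*u^4 + v^4 - (5771588/44738875)*(u^3*v)"
    unfolding w_def by (simp add: power2_eq_square power3_eq_cube power4_eq_xxxx algebra_simps)
  finally show ?thesis by simp
qed
definition G0 :: "real \<Rightarrow> real \<Rightarrow> real" where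
  "G0 x y = 3322/1000*y - (1 - 3317/10000)*x - 3317/10000*y - 29901/10000*y + 29901/10000*x"

lemma G0_bb: assumes u: "0\<le>u" and v: "0\<le>(v::real)" shows "0 \<le> G0 (1+u) (1+v)"
proof -
  have e: "G0 (1+u) (1+v) = (1161/500) + (1/5000)*(v) + (11609/5000)*(u)"
    by (simp add: G0_def field_simps power2_eq_square power3_eq_cube power4_eq_xxxx)
  have "0 \<le> v^2" "0\<le>v^3" "0\<le>v^4" "0\<le>u^2" "0\<le>u^3" "0\<le>u^4" "0 \<le> u*v" using u v by simp_all
  then show ?thesis unfolding e using am2[of u v] am3[OF u v] am4[OF u v] u v by linarith
qed

lemma G0_zb: assumes u: "0\<le>(u::real)" and v: "0\<le>(v::real)" shows "0 \<le> G0 0 (1+v)"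
proof -
  have e: "G0 0 (1+v) = (1/5000) + (1/5000)*(v)"
    by (simp add: G0_def field_simps power2_eq_square power3_eq_cube power4_eq_xxxx)
  have "0 \<le> v^2" "0\<le>v^3" "0\<le>v^4" "0\<le>u^2" "0\<le>u^3" "0\<le>u^4" "0 \<le> u*v" using u v by simp_all
  then show ?thesis unfolding e using am2[of u v] am3[OF u v] am4[OF u v] u v by linarith
qed

lemma G0_bz: assumes u: "0\<le>(u::real)" and v: "0\<le>(v::real)" shows "0 \<le> G0 (1+u) 0"
proof -
  have e: "G0 (1+u) 0 = (11609/5000) + (11609/5000)*(u)"
    by (simp add: G0_def field_simps power2_eq_square power3_eq_cube power4_eq_xxxx)
  have "0 \<le> v^2" "0\<le>v^3" "0\<le>v^4" "0\<le>u^2" "0\<le>u^3" "0\<le>u^4" "0 \<le> u*v" using u v by simp_all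
  then show ?thesis unfolding e using am2[of u v] am3[OF u v] am4[OF u v] u v by linarith
qed

lemma G0_nat: "0 \<le> G0 (real x) (real y)"
proof (cases "x = 0")
  case True
  show ?thesis
  proof (cases "y = 0")
    case True
    with \<open>x = 0\<close> show ?thesis by (simp add: G0_def)
  next
    case False
    then have "real y = 1 + (real y - 1)" "0 \<le> real y - 1" by auto
    then show ?thesis using G0_zb[of 0 "real y - 1"] \<open>x = 0\<close> by simp
  qed
next
  case False
  then have x: "real x = 1 + (real x - 1)" "0 \<le> real x - 1" by auto
  show ?thesis
  proof (cases "y = 0")
    case True
    then show ?thesis using G0_bz[of "real x - 1" 0] x by simp
  next
    case False
    then have "real y = 1 + (real y - 1)" "0 \<le> real y - 1" by auto
    then show ?thesis using G0_bb[of "real x - 1" "real y - 1"] x by simp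
  qed
qed

definition G1 :: "real \<Rightarrow> real \<Rightarrow> real" where
  "G1 x y = 3322/1000*y^2 - (1 - 3317/10000)*x^2 - 3317/10000*y*(x+1) - 29901/10000*(y*(y+1)/2) + 29901/10000*(x*(x+1)/2)"

lemma G1_bb: assumes u: "0\<le>u" and v: "0\<le>(v::real)" shows "0 \<le> G1 (1+u) (1+v)"
proof -
  have e: "G1 (1+u) (1+v) = (19903/10000) + (29909/20000)*(v) + (36539/20000)*(v^2) + (56337/20000)*(u) + (-3317/10000)*(u*v) + (3307/4000)*(u^2)"
    by (simp add: G1_def field_simps power2_eq_square power3_eq_cube power4_eq_xxxx)
  have "0 \<le> v^2" "0\<le>v^3" "0\<le>v^4" "0\<le>u^2" "0\<le>u^3" "0\<le>u^4" "0 \<le> u*v" using u v by simp_all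
  then show ?thesis unfolding e using am2[of u v] am3[OF u v] am4[OF u v] u v by linarith
qed

lemma G1_zb: assumes u: "0\<le>(u::real)" and v: "0\<le>(v::real)" shows "0 \<le> G1 0 (1+v)"
proof -
  have e: "G1 0 (1+v) = (1/5000) + (36543/20000)*(v) + (36539/20000)*(v^2)"
    by (simp add: G1_def field_simps power2_eq_square power3_eq_cube power4_eq_xxxx)
  have "0 \<le> v^2" "0\<le>v^3" "0\<le>v^4" "0\<le>u^2" "0\<le>u^3" "0\<le>u^4" "0 \<le> u*v" using u v by simp_all
  then show ?thesis unfolding e using am2[of u v] am3[OF u v] am4[OF u v] u v by linarith
qed

lemma G1_bz: assumes u: "0\<le>(u::real)" and v: "0\<le>(v::real)" shows "0 \<le> G1 (1+u) 0"
proof -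
  have e: "G1 (1+u) 0 = (11609/5000) + (62971/20000)*(u) + (3307/4000)*(u^2)"
    by (simp add: G1_def field_simps power2_eq_square power3_eq_cube power4_eq_xxxx)
  have "0 \<le> v^2" "0\<le>v^3" "0\<le>v^4" "0\<le>u^2" "0\<le>u^3" "0\<le>u^4" "0 \<le> u*v" using u v by simp_all
  then show ?thesis unfolding e using am2[of u v] am3[OF u v] am4[OF u v] u v by linarith
qed

lemma G1_nat: "0 \<le> G1 (real x) (real y)"
proof (cases "x = 0")
  case True
  show ?thesis
  proof (cases "y = 0")
    case True
    with \<open>x = 0\<close> show ?thesis by (simp add: G1_def)
  next
    case False
    then have "real y = 1 + (real y - 1)" "0 \<le> real y - 1" by auto
    then show ?thesis using G1_zb[of 0 "real y - 1"] \<open>x = 0\<close> by simp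
  qed
next
  case False
  then have x: "real x = 1 + (real x - 1)" "0 \<le> real x - 1" by auto
  show ?thesis
  proof (cases "y = 0")
    case True
    then show ?thesis using G1_bz[of "real x - 1" 0] x by simp
  next
    case False
    then have "real y = 1 + (real y - 1)" "0 \<le> real y - 1" by auto
    then show ?thesis using G1_bb[of "real x - 1" "real y - 1"] x by simp
  qed
qed

definition G2 :: "real \<Rightarrow> real \<Rightarrow> real" where
  "G2 x y = 3322/1000*y^3 - (1 - 3317/10000)*x^3 - 3317/10000*y*(x+1)^2 - 29901/10000*(y*(y+1)*(2*y+1)/6) + 29901/10000*(x*(x+1)*(2*x+1)/6)"

lemma G2_bb: assumes u: "0\<le>u" and v: "0\<le>(v::real)" shows "0 \<le> G2 (1+u) (1+v)"
proof -
  have e: "G2 (1+u) (1+v) = (13269/10000) + (43213/20000)*(v) + (109617/20000)*(v^2) + (23253/10000)*(v^3) + (62937/20000)*(u) + (-3317/2500)*(u*v) + (42971/20000)*(u^2) + (-3317/10000)*(u^2*v) + (821/2500)*(u^3)"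
    by (simp add: G2_def field_simps power2_eq_square power3_eq_cube power4_eq_xxxx)
  have "0 \<le> v^2" "0\<le>v^3" "0\<le>v^4" "0\<le>u^2" "0\<le>u^3" "0\<le>u^4" "0 \<le> u*v" using u v by simp_all
  then show ?thesis unfolding e using am2[of u v] am3[OF u v] am4[OF u v] u v by linarith
qed

lemma G2_zb: assumes u: "0\<le>(u::real)" and v: "0\<le>(v::real)" shows "0 \<le> G2 0 (1+v)"
proof -
  have e: "G2 0 (1+v) = (1/5000) + (12623/4000)*(v) + (109617/20000)*(v^2) + (23253/10000)*(v^3)"
    by (simp add: G2_def field_simps power2_eq_square power3_eq_cube power4_eq_xxxx)
  have "0 \<le> v^2" "0\<le>v^3" "0\<le>v^4" "0\<le>u^2" "0\<le>u^3" "0\<le>u^4" "0 \<le> u*v" using u v by simp_all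
  then show ?thesis unfolding e using am2[of u v] am3[OF u v] am4[OF u v] u v by linarith
qed

lemma G2_bz: assumes u: "0\<le>(u::real)" and v: "0\<le>(v::real)" shows "0 \<le> G2 (1+u) 0"
proof -
  have e: "G2 (1+u) 0 = (11609/5000) + (89473/20000)*(u) + (9921/4000)*(u^2) + (821/2500)*(u^3)"
    by (simp add: G2_def field_simps power2_eq_square power3_eq_cube power4_eq_xxxx)
  have "0 \<le> v^2" "0\<le>v^3" "0\<le>v^4" "0\<le>u^2" "0\<le>u^3" "0\<le>u^4" "0 \<le> u*v" using u v by simp_all
  then show ?thesis unfolding e using am2[of u v] am3[OF u v] am4[OF u v] u v by linarith
qed

lemma G2_nat: "0 \<le> G2 (real x) (real y)"
proof (cases "x = 0")
  case True
  show ?thesis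
  proof (cases "y = 0")
    case True
    with \<open>x = 0\<close> show ?thesis by (simp add: G2_def)
  next
    case False
    then have "real y = 1 + (real y - 1)" "0 \<le> real y - 1" by auto
    then show ?thesis using G2_zb[of 0 "real y - 1"] \<open>x = 0\<close> by simp
  qed
next
  case False
  then have x: "real x = 1 + (real x - 1)" "0 \<le> real x - 1" by auto
  show ?thesis
  proof (cases "y = 0")
    case True
    then show ?thesis using G2_bz[of "real x - 1" 0] x by simp
  next
    case False
    then have "real y = 1 + (real y - 1)" "0 \<le> real y - 1" by auto
    then show ?thesis using G2_bb[of "real x - 1" "real y - 1"] x by simp
  qed
qed

definition G3 :: "real \<Rightarrow> real \<Rightarrow> real" where
  "G3 x y = 3322/1000*y^4 - (1 - 3317/10000)*x^4 - 3317/10000*y*(x+1)^3 - 29901/10000*(y*(y+1)/2)^2 + 29901/10000*(x*(x+1)/2)^2"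

lemma G3_bb: assumes u: "0\<le>u" and v: "0\<le>(v::real)" shows "0 \<le> G3 (1+u) (1+v)"
proof -
  have e: "G3 (1+u) (1+v) = (1/10000) + (16641/10000)*(v) + (408567/40000)*(v^2) + (176057/20000)*(v^3) + (102979/40000)*(v^4) + (23167/10000)*(u) + (-9951/2500)*(u*v) + (148713/40000)*(u^2) + (-9951/5000)*(u^2*v) + (5921/4000)*(u^3) + (-3317/10000)*(u^3*v) + (3169/40000)*(u^4)"
    by (simp add: G3_def field_simps power2_eq_square power3_eq_cube power4_eq_xxxx)
  have "0 \<le> v^2" "0\<le>v^3" "0\<le>v^4" "0\<le>u^2" "0\<le>u^3" "0\<le>u^4" "0 \<le> u*v" using u v by simp_all
  then show ?thesis unfolding e using am2[of u v] am3[OF u v] am4[OF u v] u v by linarith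
qed

lemma G3_zb: assumes u: "0\<le>(u::real)" and v: "0\<le>(v::real)" shows "0 \<le> G3 0 (1+v)"
proof -
  have e: "G3 0 (1+v) = (1/5000) + (1993/500)*(v) + (408567/40000)*(v^2) + (176057/20000)*(v^3) + (102979/40000)*(v^4)"
    by (simp add: G3_def field_simps power2_eq_square power3_eq_cube power4_eq_xxxx)
  have "0 \<le> v^2" "0\<le>v^3" "0\<le>v^4" "0\<le>u^2" "0\<le>u^3" "0\<le>u^4" "0 \<le> u*v" using u v by simp_all
  then show ?thesis unfolding e using am2[of u v] am3[OF u v] am4[OF u v] u v by linarith
qed

lemma G3_bz: assumes u: "0\<le>(u::real)" and v: "0\<le>(v::real)" shows "0 \<le> G3 (1+u) 0"
proof -
  have e: "G3 (1+u) 0 = (11609/5000) + (62971/10000)*(u) + (228321/40000)*(u^2) + (36239/20000)*(u^3) + (3169/40000)*(u^4)"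
    by (simp add: G3_def field_simps power2_eq_square power3_eq_cube power4_eq_xxxx)
  have "0 \<le> v^2" "0\<le>v^3" "0\<le>v^4" "0\<le>u^2" "0\<le>u^3" "0\<le>u^4" "0 \<le> u*v" using u v by simp_all
  then show ?thesis unfolding e using am2[of u v] am3[OF u v] am4[OF u v] u v by linarith
qed

lemma G3_nat: "0 \<le> G3 (real x) (real y)"
proof (cases "x = 0")
  case True
  show ?thesis
  proof (cases "y = 0")
    case True
    with \<open>x = 0\<close> show ?thesis by (simp add: G3_def)
  next
    case False
    then have "real y = 1 + (real y - 1)" "0 \<le> real y - 1" by auto
    then show ?thesis using G3_zb[of 0 "real y - 1"] \<open>x = 0\<close> by simp
  qed
next
  case False
  then have x: "real x = 1 + (real x - 1)" "0 \<le> real x - 1" by auto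
  show ?thesis
  proof (cases "y = 0")
    case True
    then show ?thesis using G3_bz[of "real x - 1" 0] x by simp
  next
    case False
    then have "real y = 1 + (real y - 1)" "0 \<le> real y - 1" by auto
    then show ?thesis using G3_bb[of "real x - 1" "real y - 1"] x by simp
  qed
qed



lemma sum1: "(\<Sum>k=1..m. real k) = real m*(real m+1)/2"
  by (induction m) (simp_all add: field_simps)
lemma sum2: "(\<Sum>k=1..m. real k^2) = real m*(real m+1)*(2*real m+1)/6"
  by (induction m) (simp_all add: field_simps power2_eq_square)
lemma sum3: "(\<Sum>k=1..m. real k^3) = (real m*(real m+1)/2)^2"
  by (induction m) (simp_all add: field_simps power2_eq_square power3_eq_cube)

lemma resource_ineq:
  fixes f :: "real \<Rightarrow> real" and \<alpha> :: "nat \<Rightarrow> real"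
  assumes a: "\<forall>j. \<alpha> j \<ge> 0" and f: "\<forall>z\<ge>0. f z = (\<Sum>j\<le>3. \<alpha> j * z^j)"
  shows "(1 - 3317/10000) * (real x * f (real x)) + 3317/10000 * (real y * f (real x + 1))
     + 29901/10000 * ((\<Sum>k=1..y. f (real k)) - (\<Sum>k=1..x. f (real k)))
     \<le> 3322/1000 * (real y * f (real y))"
proof -
  have f': "f z = \<alpha> 0 + \<alpha> 1 * z + \<alpha> 2 * z^2 + \<alpha> 3 * z^3" if "z \<ge> 0" for z
    using f that by (simp add: eval_nat_numeral)
  have sf: "(\<Sum>k=1..m. f (real k)) = \<alpha> 0 * real m + \<alpha> 1 * (real m*(real m+1)/2)
      + \<alpha> 2 * (real m*(real m+1)*(2*real m+1)/6) + \<alpha> 3 * (real m*(real m+1)/2)^2" for m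
  proof -
    have "(\<Sum>k=1..m. f (real k)) = (\<Sum>k=1..m. \<alpha> 0 + \<alpha> 1 * real k + \<alpha> 2 * real k^2 + \<alpha> 3 * real k^3)"
      by (rule sum.cong) (simp_all add: f')
    also have "\<dots> = \<alpha> 0 * real m + \<alpha> 1 * (\<Sum>k=1..m. real k) + \<alpha> 2 * (\<Sum>k=1..m. real k^2) + \<alpha> 3 * (\<Sum>k=1..m. real k^3)"
      by (simp add: sum.distrib sum_distrib_left)
    finally show ?thesis by (simp only: sum1 sum2 sum3)
  qed
  have eq: "3322/1000 * (real y * f (real y)) - ((1 - 3317/10000) * (real x * f (real x)) + 3317/10000 * (real y * f (real x + 1))
     + 29901/10000 * ((\<Sum>k=1..y. f (real k)) - (\<Sum>k=1..x. f (real k))))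
     = \<alpha> 0 * G0 (real x) (real y) + \<alpha> 1 * G1 (real x) (real y) + \<alpha> 2 * G2 (real x) (real y) + \<alpha> 3 * G3 (real x) (real y)"
    unfolding sf by (simp add: f' G0_def G1_def G2_def G3_def field_simps power2_eq_square power3_eq_cube power4_eq_xxxx)
  have "0 \<le> \<alpha> 0 * G0 (real x) (real y) + \<alpha> 1 * G1 (real x) (real y) + \<alpha> 2 * G2 (real x) (real y) + \<alpha> 3 * G3 (real x) (real y)"
    using a G0_nat G1_nat G2_nat G3_nat by (simp add: add_nonneg_nonneg mult_nonneg_nonneg)
  then show ?thesis using eq by linarith
qed


definition cnt :: "nat \<Rightarrow> (nat \<Rightarrow> 'e set) \<Rightarrow> 'e \<Rightarrow> nat" where
  "cnt n S e = card {i. i < n \<and> e \<in> S i}"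

definition pot :: "nat \<Rightarrow> 'e set \<Rightarrow> ('e \<Rightarrow> real \<Rightarrow> real) \<Rightarrow> (nat \<Rightarrow> 'e set) \<Rightarrow> real" where
  "pot n E l S = (\<Sum>e\<in>E. \<Sum>k=1..cnt n S e. l e (real k))"

lemma fin_cnt_set: fixes n :: nat shows "finite {i. i < n \<and> e \<in> S i}"
proof -
  have "{i. i < n \<and> e \<in> S i} \<subseteq> {..<n}" by auto
  then show ?thesis by (rule finite_subset) simp
qed

lemma congestion_cnt: "unweighted n w \<Longrightarrow> congestion n w S e = real (cnt n S e)"
proof -
  assume u: "unweighted n w"
  have "congestion n w S e = (\<Sum>i\<in>{i. i < n \<and> e \<in> S i}. 1)"
    unfolding congestion_def by (rule sum.cong) (use u in \<open>auto simp: unweighted_def\<close>)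
  then show ?thesis by (simp add: cnt_def)
qed

lemma double_count:
  fixes g :: "'e \<Rightarrow> real"
  assumes "finite E" "\<forall>i<n. S i \<subseteq> E"
  shows "(\<Sum>i<n. \<Sum>e\<in>S i. g e) = (\<Sum>e\<in>E. real (cnt n S e) * g e)"
proof -
  have "(\<Sum>i<n. \<Sum>e\<in>S i. g e) = (\<Sum>i<n. \<Sum>e\<in>E. if e \<in> S i then g e else 0)"
  proof (rule sum.cong)
    fix i assume "i \<in> {..<n}"
    then have "S i = {e\<in>E. e \<in> S i}" using assms by auto
    then have "(\<Sum>e\<in>S i. g e) = (\<Sum>e\<in>{e\<in>E. e \<in> S i}. g e)" by simp
    also have "\<dots> = (\<Sum>e\<in>E. if e \<in> S i then g e else 0)" using assms(1) by (rule sum.inter_filter)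
    finally show "(\<Sum>e\<in>S i. g e) = (\<Sum>e\<in>E. if e \<in> S i then g e else 0)" .
  qed simp
  also have "\<dots> = (\<Sum>e\<in>E. \<Sum>i<n. if e \<in> S i then g e else 0)" by (rule sum.swap)
  also have "\<dots> = (\<Sum>e\<in>E. real (cnt n S e) * g e)"
  proof (rule sum.cong)
    fix e assume "e \<in> E"
    have "(\<Sum>i<n. if e \<in> S i then g e else 0) = (\<Sum>i\<in>{i\<in>{..<n}. e \<in> S i}. g e)"
      by (rule sum.inter_filter[symmetric]) simp
    also have "{i\<in>{..<n}. e \<in> S i} = {i. i < n \<and> e \<in> S i}" by auto
    finally show "(\<Sum>i<n. if e \<in> S i then g e else 0) = real (cnt n S e) * g e"
      by (simp add: cnt_def)
  qed simp
  finally show ?thesis .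
qed

lemma SUM_eq:
  assumes "finite E" "\<forall>i<n. S i \<subseteq> E" "unweighted n w"
  shows "SUM_cost n w l S = (\<Sum>e\<in>E. real (cnt n S e) * l e (real (cnt n S e)))"
proof -
  have "SUM_cost n w l S = (\<Sum>i<n. \<Sum>e\<in>S i. l e (real (cnt n S e)))"
    unfolding SUM_cost_def player_cost_def by (simp add: congestion_cnt[OF assms(3)])
  also have "\<dots> = (\<Sum>e\<in>E. real (cnt n S e) * l e (real (cnt n S e)))"
    using double_count[OF assms(1,2)] by blast
  finally show ?thesis .
qed

lemma cnt_upd:
  assumes "i < n"
  shows "{j. j < n \<and> e \<in> (S(i := t)) j} =
    (if e \<in> t then insert i {j. j < n \<and> e \<in> S j} else {j. j < n \<and> e \<in> S j} - {i})"
  using assms by auto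

lemma cnt_upd_le:
  assumes "i < n"
  shows "cnt n (S(i := t)) e \<le> cnt n S e + 1"
proof -
  have "{j. j < n \<and> e \<in> (S(i := t)) j} \<subseteq> insert i {j. j < n \<and> e \<in> S j}" by auto
  then have "cnt n (S(i := t)) e \<le> card (insert i {j. j < n \<and> e \<in> S j})"
    unfolding cnt_def by (intro card_mono) (auto intro: fin_cnt_set)
  also have "\<dots> \<le> cnt n S e + 1" unfolding cnt_def
    by (metis card_insert_le_m1 diff_add_inverse2 fin_cnt_set le_add2 card_insert_if
          Suc_eq_plus1 eq_imp_le le_SucI)
  finally show ?thesis .
qed

lemma per_e_diff:
  fixes f :: "nat \<Rightarrow> real"
  assumes "i < n"
  shows "(\<Sum>k=1..cnt n (S(i:=t)) e. f k) - (\<Sum>k=1..cnt n S e. f k)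
    = (if e \<in> t then f (cnt n (S(i:=t)) e) else 0) - (if e \<in> S i then f (cnt n S e) else 0)"
proof -
  define A where "A = {j. j < n \<and> e \<in> S j}"
  have fA: "finite A" unfolding A_def by (rule fin_cnt_set)
  have iA: "i \<in> A \<longleftrightarrow> e \<in> S i" using assms unfolding A_def by auto
  have c: "cnt n S e = card A" unfolding A_def cnt_def ..
  have c': "cnt n (S(i:=t)) e = card (if e \<in> t then insert i A else A - {i})"
    unfolding cnt_def A_def cnt_upd[OF assms] by simp
  show ?thesis
  proof (cases "e \<in> t")
    case True
    then show ?thesis
    proof (cases "e \<in> S i")
      case True
      with \<open>e \<in> t\<close> iA show ?thesis by (simp add: c c' insert_absorb)
    next
      case False
      with \<open>e \<in> t\<close> iA fA have "cnt n (S(i:=t)) e = Suc (cnt n S e)" by (simp add: c c')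
      with \<open>e \<in> t\<close> False show ?thesis by simp
    qed
  next
    case False
    then show ?thesis
    proof (cases "e \<in> S i")
      case True
      with iA fA have "card A = Suc (card (A - {i}))"
        by (metis card_Suc_Diff1)
      with \<open>e \<notin> t\<close> True have "cnt n S e = Suc (cnt n (S(i:=t)) e)" by (simp add: c c')
      with \<open>e \<notin> t\<close> True show ?thesis by simp
    next
      case False
      with \<open>e \<notin> t\<close> iA show ?thesis by (simp add: c c')
    qed
  qed
qed

lemma rosenthal:
  assumes "finite E" "\<forall>j<n. S j \<subseteq> E" "i < n" "t \<subseteq> E" "unweighted n w"
  shows "pot n E l (S(i:=t)) - pot n E l S = player_cost n w l (S(i:=t)) i - player_cost n w l S i"
proof -
  have "pot n E l (S(i:=t)) - pot n E l S =
     (\<Sum>e\<in>E. (if e \<in> t then l e (real (cnt n (S(i:=t)) e)) else 0)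
             - (if e \<in> S i then l e (real (cnt n S e)) else 0))"
    unfolding pot_def sum_subtractf[symmetric]
  proof (rule sum.cong)
    fix e assume "e \<in> E"
    show "(\<Sum>k=1..cnt n (S(i:=t)) e. l e (real k)) - (\<Sum>k=1..cnt n S e. l e (real k)) =
     (if e \<in> t then l e (real (cnt n (S(i:=t)) e)) else 0)
             - (if e \<in> S i then l e (real (cnt n S e)) else 0)"
      by (rule per_e_diff[OF assms(3)])
  qed simp
  also have "\<dots> = (\<Sum>e\<in>E. if e \<in> t then l e (real (cnt n (S(i:=t)) e)) else 0)
             - (\<Sum>e\<in>E. if e \<in> S i then l e (real (cnt n S e)) else 0)"
    by (rule sum_subtractf)
  also have "(\<Sum>e\<in>E. if e \<in> t then l e (real (cnt n (S(i:=t)) e)) else 0) = (\<Sum>e\<in>{e\<in>E. e\<in>t}. l e (real (cnt n (S(i:=t)) e)))"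
    using assms(1) by (rule sum.inter_filter[symmetric])
  also have "{e\<in>E. e\<in>t} = t" using assms(4) by auto
  also have "(\<Sum>e\<in>E. if e \<in> S i then l e (real (cnt n S e)) else 0) = (\<Sum>e\<in>{e\<in>E. e\<in>S i}. l e (real (cnt n S e)))"
    using assms(1) by (rule sum.inter_filter[symmetric])
  also have "{e\<in>E. e\<in>S i} = S i" using assms(2,3) by auto
  finally show ?thesis unfolding player_cost_def congestion_cnt[OF assms(5)] fun_upd_same .
qed



lemma cubic_mono:
  fixes f :: "real \<Rightarrow> real"
  assumes a: "\<forall>j. \<alpha> j \<ge> 0" and f: "\<forall>z\<ge>0. f z = (\<Sum>j\<le>3. \<alpha> j * z^j)"
    and "0 \<le> y" "y \<le> z"
  shows "f y \<le> f z"
proof -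
  have "(\<Sum>j\<le>3. \<alpha> j * y^j) \<le> (\<Sum>j\<le>(3::nat). \<alpha> j * z^j)"
    by (rule sum_mono) (use assms in \<open>auto intro!: mult_left_mono power_mono\<close>)
  then show ?thesis using f assms by simp
qed

lemma lin_sum: fixes A B C D :: "'a \<Rightarrow> real"
  shows "(\<Sum>e\<in>E. c1*A e + c2*B e + c3*(C e - D e)) = c1*sum A E + c2*sum B E + c3*(sum C E - sum D E)"
  by (simp add: sum.distrib sum_subtractf sum_distrib_left right_diff_distrib)

lemma final_arith:
  fixes P Q s N ps pt t :: real
  assumes "P \<le> Q" "P = (1 - 3317/10000) * s + 3317/10000 * N + 29901/10000 * (pt - ps)"
    "Q = 3322/1000 * t" "s \<le> N" "ps \<le> pt"
  shows "s \<le> 3322/1000 * t"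
proof -
  have a: "3317/10000 * s \<le> 3317/10000 * N" using assms(4) by simp
  have b: "0 \<le> 29901/10000 * (pt - ps)" using assms by simp
  have "s = (1 - 3317/10000) * s + 3317/10000 * s" by simp
  also have "\<dots> \<le> P" using a b assms(2) by linarith
  finally show ?thesis using assms(1,3) by linarith
qed

theorem mainTheorem10:
  fixes n :: nat and E :: "'e set" and w :: "nat \<Rightarrow> real"
    and Sig :: "nat \<Rightarrow> 'e set set" and l :: "'e \<Rightarrow> real \<Rightarrow> real"
  assumes "is_congestion_game n E w Sig l"
    and "unweighted n w"
    and "cubic_latencies E l"
  shows "\<exists>S. is_PNE n w Sig l S \<and>
           (\<forall>T. is_profile n Sig T \<longrightarrow> SUM_cost n w l S \<le> 3.322 * SUM_cost n w l T)"
proof -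
  have finE: "finite E" and sig: "\<And>i. i < n \<Longrightarrow> Sig i \<noteq> {} \<and> Sig i \<subseteq> Pow E"
    using assms(1) unfolding is_congestion_game_def by auto
  have uw: "unweighted n w" by fact
  have cub: "\<And>e. e \<in> E \<Longrightarrow> \<exists>\<alpha> :: nat \<Rightarrow> real. (\<forall>j. \<alpha> j \<ge> 0) \<and> (\<forall>x\<ge>0. l e x = (\<Sum>j\<le>3. \<alpha> j * x ^ j))"
    using assms(3) unfolding cubic_latencies_def by auto
  define PS where "PS = {S :: nat \<Rightarrow> 'e set. (\<forall>i<n. S i \<in> Sig i) \<and> (\<forall>i. n \<le> i \<longrightarrow> S i = {})}"
  define ext where "ext = (\<lambda>(f :: nat \<Rightarrow> 'e set) i. if i < n then f i else {})"
  have "PS \<subseteq> ext ` (PiE {..<n} Sig)"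
  proof
    fix S assume S: "S \<in> PS"
    have "S = ext (restrict S {..<n})" using S unfolding PS_def ext_def by (auto simp: fun_eq_iff restrict_def)
    moreover have "restrict S {..<n} \<in> PiE {..<n} Sig" using S unfolding PS_def by auto
    ultimately show "S \<in> ext ` (PiE {..<n} Sig)" by blast
  qed
  moreover have "finite (PiE {..<n} Sig)"
    by (rule finite_PiE) (use assms(1) in \<open>auto simp: is_congestion_game_def\<close>)
  ultimately have finPS: "finite PS" by (meson finite_imageI finite_subset)
  define S0 where "S0 = (\<lambda>i. if i < n then (SOME t. t \<in> Sig i) else {})"
  have "S0 \<in> PS" unfolding PS_def S0_def using sig by (auto intro: someI_ex simp: ex_in_conv)
  then have neP: "PS \<noteq> {}" by auto
  define m where "m = Min (pot n E l ` PS)"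
  have "m \<in> pot n E l ` PS" unfolding m_def using finPS neP by (intro Min_in) auto
  then obtain S where SP: "S \<in> PS" and Sm: "pot n E l S = m" by auto
  have Smin: "pot n E l S \<le> pot n E l T" if "T \<in> PS" for T
    using Sm that finPS unfolding m_def by simp
  have SE: "\<forall>j<n. S j \<subseteq> E" using SP sig unfolding PS_def by blast
  have pne: "is_PNE n w Sig l S"
    unfolding is_PNE_def
  proof (intro conjI allI impI ballI)
    show "is_profile n Sig S" using SP unfolding PS_def is_profile_def by auto
  next
    fix i t assume i: "i < n" and t: "t \<in> Sig i"
    have "S(i := t) \<in> PS" using SP i t unfolding PS_def by auto
    then have "pot n E l S \<le> pot n E l (S(i:=t))" by (rule Smin)
    moreover have "t \<subseteq> E" using sig[OF i] t by auto
    ultimately show "player_cost n w l S i \<le> player_cost n w l (S(i := t)) i"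
      using rosenthal[OF finE SE i _ uw, of t l] by linarith
  qed
  have bound: "SUM_cost n w l S \<le> 3.322 * SUM_cost n w l T" if T: "is_profile n Sig T" for T
  proof -
    have TE: "\<forall>j<n. T j \<subseteq> E" using T sig unfolding is_profile_def by blast
    define T0 where "T0 = ext T"
    have "T0 \<in> PS" using T unfolding T0_def ext_def PS_def is_profile_def by auto
    have "cnt n T0 = cnt n T" unfolding cnt_def by (rule ext, rule arg_cong[where f=card]) (auto simp: T0_def ext_def)
    then have potT: "pot n E l S \<le> pot n E l T"
      using Smin[OF \<open>T0 \<in> PS\<close>] unfolding pot_def by simp
    define x where "x = cnt n S"
    define y where "y = cnt n T"
    have sumS: "SUM_cost n w l S = (\<Sum>e\<in>E. real (x e) * l e (real (x e)))"
      unfolding x_def by (rule SUM_eq[OF finE SE uw])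
    have sumT: "SUM_cost n w l T = (\<Sum>e\<in>E. real (y e) * l e (real (y e)))"
      unfolding y_def by (rule SUM_eq[OF finE TE uw])
    have nash: "SUM_cost n w l S \<le> (\<Sum>e\<in>E. real (y e) * l e (real (x e) + 1))"
    proof -
      have "SUM_cost n w l S \<le> (\<Sum>i<n. player_cost n w l (S(i := T i)) i)"
        unfolding SUM_cost_def
        by (rule sum_mono) (use pne T in \<open>auto simp: is_PNE_def is_profile_def\<close>)
      also have "\<dots> \<le> (\<Sum>i<n. \<Sum>e\<in>T i. l e (real (x e) + 1))"
      proof (rule sum_mono)
        fix i assume i: "i \<in> {..<n}"
        show "player_cost n w l (S(i := T i)) i \<le> (\<Sum>e\<in>T i. l e (real (x e) + 1))"
          unfolding player_cost_def fun_upd_same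
        proof (rule sum_mono)
          fix e assume e: "e \<in> T i"
          then have "e \<in> E" using TE i by auto
          then obtain \<alpha> :: "nat \<Rightarrow> real" where a: "\<forall>j. \<alpha> j \<ge> 0" "\<forall>x\<ge>0. l e x = (\<Sum>j\<le>3. \<alpha> j * x ^ j)"
            using cub by blast
          have "cnt n (S(i := T i)) e \<le> x e + 1" unfolding x_def using i by (intro cnt_upd_le) simp
          then have "real (cnt n (S(i := T i)) e) \<le> real (x e) + 1" by linarith
          then show "l e (congestion n w (S(i := T i)) e) \<le> l e (real (x e) + 1)"
            unfolding congestion_cnt[OF uw] by (intro cubic_mono[OF a]) auto
        qed
      qed
      also have "\<dots> = (\<Sum>e\<in>E. real (y e) * l e (real (x e) + 1))"
        unfolding y_def by (rule double_count[OF finE TE])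
      finally show ?thesis .
    qed
    have res: "(\<Sum>e\<in>E. (1 - 3317/10000) * (real (x e) * l e (real (x e))) + 3317/10000 * (real (y e) * l e (real (x e) + 1))
     + 29901/10000 * ((\<Sum>k=1..y e. l e (real k)) - (\<Sum>k=1..x e. l e (real k))))
     \<le> (\<Sum>e\<in>E. 3322/1000 * (real (y e) * l e (real (y e))))"
    proof (rule sum_mono)
      fix e assume "e \<in> E"
      then obtain \<alpha> :: "nat \<Rightarrow> real" where a: "\<forall>j. \<alpha> j \<ge> 0" "\<forall>x\<ge>0. l e x = (\<Sum>j\<le>3. \<alpha> j * x ^ j)"
        using cub by blast
      show "(1 - 3317/10000) * (real (x e) * l e (real (x e))) + 3317/10000 * (real (y e) * l e (real (x e) + 1))
     + 29901/10000 * ((\<Sum>k=1..y e. l e (real k)) - (\<Sum>k=1..x e. l e (real k)))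
     \<le> 3322/1000 * (real (y e) * l e (real (y e)))"
        by (rule resource_ineq[OF a])
    qed
    have lhs: "(\<Sum>e\<in>E. (1 - 3317/10000) * (real (x e) * l e (real (x e))) + 3317/10000 * (real (y e) * l e (real (x e) + 1))
     + 29901/10000 * ((\<Sum>k=1..y e. l e (real k)) - (\<Sum>k=1..x e. l e (real k))))
     = (1 - 3317/10000) * SUM_cost n w l S + 3317/10000 * (\<Sum>e\<in>E. real (y e) * l e (real (x e) + 1))
       + 29901/10000 * (pot n E l T - pot n E l S)"
      unfolding sumS pot_def x_def y_def by (rule lin_sum)
    have rhs: "(\<Sum>e\<in>E. 3322/1000 * (real (y e) * l e (real (y e)))) = 3322/1000 * SUM_cost n w l T"
      unfolding sumT by (simp add: sum_distrib_left)
    have r: "(3.322::real) = 3322/1000" by simp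
    show ?thesis unfolding r using final_arith[OF res lhs rhs nash potT] .
  qed
  show ?thesis using pne bound by blast
qed
end
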